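(* Let $\lambda>0$, $A\in\mathbb{R}^{m\times n}$ with $m<n$ and $\dim\ker A=n-m$, $b\in\mathbb{R}^m$, let $q=q_1-q_2:\mathbb{R}^m\to[0,+\infty)$ where $q_1:\mathbb{R}^m\to\mathbb{R}$ is continuously differentiable with Lipschitz continuous gradient and $q_2:\mathbb{R}^m\to\mathbb{R}$ is convex and continuous, and let $\mathcal{X}\subseteq\mathbb{R}^n$ be a closed hyperrectangle (possibly unbounded) with $0\in\mathcal{X}$. Set $\Phi(x):=\lambda\frac{\|x\|_1^2}{\|x\|_2^2}+q(Ax-b)$ for $x\neq0$, $\nu^\star:=\inf\{\Phi(x):x\in\mathcal{X}\setminus\{0\}\}$, and assume $\nu^\star<\lambda+q(-b)$. Then the set of optimal solutions $\{x\in\mathcal{X}\setminus\{0\}:\Phi(x)=\nu^\star\}$ is nonempty if one of the following holds: (i) $\mathcal{X}$ is bounded; (ii) $q$ is coercive, $\ker A$ has the $s$-spherical section property for some $s>0$, and there exists $\widetilde{x}\in\mathbb{R}^n$ with $0\neq\widetilde{x}\in\arg\min_{x\in\mathcal{X}}q(Ax-b)$ and $\|\widetilde{x}\|_0<m/s$.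
   Context: A closed hyperrectangle is a set $\{x\in\mathbb{R}^n:\underline{x}\le x\le\overline{x}\}$ with $\underline{x}\in(\mathbb{R}\cup\{-\infty\})^n$, $\overline{x}\in(\mathbb{R}\cup\{+\infty\})^n$. $\|x\|_0$ is the number of nonzero entries of $x$. For positive integers $m<n$, an $(n-m)$-dimensional subspace $V\subseteq\mathbb{R}^n$ has the $s$-spherical section property if $\inf_{v\in V\setminus\{0\}}\|v\|_1/\|v\|_2\ge\sqrt{m/s}$. The inequality $\nu^\star<\lambda+q(-b)$ is a standing assumption of the paper. *)

theory Defs
  imports "HOL-Analysis.Analysis" "HOL-Library.Extended_Real"
begin

definition closed_hyperrectangle :: "(real^'n) set \<Rightarrow> bool" where
  "closed_hyperrectangle X \<longleftrightarrow>
     (\<exists>lo hi :: 'n \<Rightarrow> ereal. (\<forall>i. lo i \<noteq> \<infinity> \<and> hi i \<noteq> -\<infinity>) \<and>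
        X = {x. \<forall>i. lo i \<le> ereal (x$i) \<and> ereal (x$i) \<le> hi i})"

definition norm1 :: "real^'n \<Rightarrow> real" where
  "norm1 x = (\<Sum>i\<in>UNIV. \<bar>x$i\<bar>)"

definition norm0 :: "real^'n \<Rightarrow> nat" where
  "norm0 x = card {i. x$i \<noteq> 0}"

definition spherical_section_property :: "nat \<Rightarrow> real \<Rightarrow> (real^'n) set \<Rightarrow> bool" where
  "spherical_section_property m s V \<longleftrightarrow>
     subspace V \<and> dim V = CARD('n) - m \<and>
     (INF v\<in>V - {0}. ereal (norm1 v / norm v)) \<ge> ereal (sqrt (real m / s))"

end

theory Submission
  imports Defs
begin

lemma hr_closed:
  fixes X :: "(real^'n) set"
  assumes "closed_hyperrectangle X" shows "closed X"
proof -
  obtain lo hi :: "'n \<Rightarrow> ereal" where X: "X = {x. \<forall>i. lo i \<le> ereal (x$i) \<and> ereal (x$i) \<le> hi i}"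
    using assms unfolding closed_hyperrectangle_def by blast
  have c: "continuous_on UNIV (\<lambda>x::real^'n. ereal (x$i))" for i
    by (intro continuous_intros)
  show ?thesis unfolding X
    by (intro closed_Collect_all closed_Collect_conj closed_Collect_le c continuous_on_const)
qed

lemma norm_le_norm1: "norm x \<le> norm1 x"
  unfolding norm1_def by (rule norm_le_l1_cart)

lemma norm1_nonneg: "0 \<le> norm1 x"
  unfolding norm1_def by (simp add: sum_nonneg)

lemma norm1_scale: "norm1 (c *\<^sub>R x) = \<bar>c\<bar> * norm1 x"
  unfolding norm1_def by (simp add: abs_mult sum_distrib_left)

lemma norm1_cont: "continuous_on UNIV norm1"
  unfolding norm1_def by (intro continuous_intros)

lemma norm1_sq_le: "(norm1 x)^2 \<le> real (norm0 x) * (norm x)^2"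
proof -
  let ?S = "{i. x$i \<noteq> 0}"
  have "norm1 x = (\<Sum>i\<in>?S. \<bar>x$i\<bar>)"
    unfolding norm1_def by (rule sum.mono_neutral_right) auto
  hence "(norm1 x)^2 \<le> (\<Sum>i\<in>?S. \<bar>x$i\<bar>^2) * real (card ?S)"
    using sum_squared_le_sum_of_squares by metis
  also have "(\<Sum>i\<in>?S. \<bar>x$i\<bar>^2) = (\<Sum>i\<in>UNIV. (x$i)^2)"
    by (simp only: power2_abs) (rule sum.mono_neutral_left, auto)
  also have "\<dots> = (norm x)^2"
    by (simp add: norm_vec_def L2_set_def sum_nonneg)
  finally show ?thesis unfolding norm0_def by (simp add: mult.commute)
qed

lemma ratio_ge1:
  assumes "x \<noteq> 0" shows "1 \<le> (norm1 x)^2 / (norm x)^2"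
proof -
  have "(norm x)^2 \<le> (norm1 x)^2" using norm_le_norm1[of x] by (simp add: power_mono)
  thus ?thesis using assms by simp
qed


theorem theorem3p1:
  fixes lam :: real
    and A :: "real^'n^'m"
    and b :: "real^'m"
    and q1 q2 :: "real^'m \<Rightarrow> real"
    and g :: "real^'m \<Rightarrow> real^'m"
    and X :: "(real^'n) set"
  assumes lam_pos: "lam > 0"
    and mn: "CARD('m) < CARD('n)"
    and kerdim: "dim {x. A *v x = 0} = CARD('n) - CARD('m)"
    and q1_diff: "\<And>y. (q1 has_derivative (\<lambda>h. g y \<bullet> h)) (at y)"
    and g_cont: "continuous_on UNIV g"
    and g_lip: "\<exists>L. \<forall>y z. norm (g y - g z) \<le> L * norm (y - z)"
    and q2_convex: "convex_on UNIV q2"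
    and q2_cont: "continuous_on UNIV q2"
    and q_nonneg: "\<And>y. q1 y - q2 y \<ge> 0"
    and X_rect: "closed_hyperrectangle X"
    and X0: "0 \<in> X"
    and standing: "(INF x\<in>X - {0}. ereal (lam * (norm1 x)\<^sup>2 / (norm x)\<^sup>2 + (q1 (A *v x - b) - q2 (A *v x - b))))
                     < ereal (lam + (q1 (- b) - q2 (- b)))"
    and cases: "bounded X \<or>
       (filterlim (\<lambda>y. q1 y - q2 y) at_top at_infinity \<and>
        (\<exists>s>0. spherical_section_property CARD('m) s {x. A *v x = 0} \<and>
           (\<exists>xt. xt \<noteq> 0 \<and> xt \<in> X \<and>
                 (\<forall>x\<in>X. q1 (A *v xt - b) - q2 (A *v xt - b) \<le> q1 (A *v x - b) - q2 (A *v x - b)) \<and>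
                 real (norm0 xt) < real CARD('m) / s)))"
  shows "\<exists>x\<in>X - {0}. ereal (lam * (norm1 x)\<^sup>2 / (norm x)\<^sup>2 + (q1 (A *v x - b) - q2 (A *v x - b)))
            = (INF x\<in>X - {0}. ereal (lam * (norm1 x)\<^sup>2 / (norm x)\<^sup>2 + (q1 (A *v x - b) - q2 (A *v x - b))))"
proof -
  define q where "q y = q1 y - q2 y" for y
  define P where "P x = A *v x - b" for x
  define F where "F x = lam * (norm1 x)^2 / (norm x)^2 + q (P x)" for x
  have q_cont: "isCont q y" for y
  proof -
    have "isCont q1 y" using q1_diff has_derivative_continuous by blast
    moreover have "isCont q2 y" using q2_cont continuous_on_eq_continuous_at open_UNIV by blast
    ultimately show ?thesis unfolding q_def by (intro continuous_intros)
  qed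
  have qnn: "0 \<le> q y" for y using q_nonneg unfolding q_def by simp
  have P_cont: "isCont P x" for x unfolding P_def by (intro continuous_intros)
  have Fge: "lam + q (P x) \<le> F x" if "x \<noteq> 0" for x
  proof -
    have "lam * 1 \<le> lam * ((norm1 x)^2 / (norm x)^2)"
      using ratio_ge1[OF that] lam_pos by (intro mult_left_mono) auto
    thus ?thesis unfolding F_def by simp
  qed
  have Fnn: "0 \<le> F x" for x unfolding F_def using qnn lam_pos by (simp add: divide_nonneg_nonneg)
  have F_cont: "isCont F x" if "x \<noteq> 0" for x
  proof -
    have "isCont norm1 x" using norm1_cont continuous_on_eq_continuous_at open_UNIV by blast
    moreover have "isCont (\<lambda>x. q (P x)) x" using q_cont P_cont continuous_at_compose[of x P q] by (simp add: o_def)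
    ultimately show ?thesis unfolding F_def using that by (intro continuous_intros) auto
  qed
  have st: "(INF x\<in>X-{0}. ereal (F x)) < ereal (lam + q (P 0))"
    using standing by (simp add: F_def q_def P_def)
  then obtain x0 where x0: "x0 \<in> X - {0}" "F x0 < lam + q (P 0)"
    by (auto simp: INF_less_iff)
  define v where "v = Inf (F ` (X - {0}))"
  have bdd: "bdd_below (F ` (X-{0}))" using Fnn by (intro bdd_belowI[of _ 0]) auto
  have v_le: "v \<le> F y" if "y \<in> X - {0}" for y unfolding v_def using bdd that by (intro cInf_lower) auto
  have v_lt: "v < lam + q (P 0)" using v_le[OF x0(1)] x0(2) by simp
  have approx: "\<exists>x\<in>X-{0}. F x < v + e" if "e > 0" for e
  proof -
    have "Inf (F ` (X - {0})) < v + e" using that v_def by simp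
    then obtain y where "y \<in> F ` (X-{0})" "y < v + e" using x0(1) by (subst (asm) cInf_less_iff) (auto simp: bdd)
    thus ?thesis by auto
  qed
  have bound: "\<exists>e>0. \<exists>R. \<forall>x\<in>X-{0}. F x \<le> v + e \<longrightarrow> norm x \<le> R"
    using cases
  proof
    assume "bounded X"
    then obtain R where "\<forall>x\<in>X. norm x \<le> R" by (auto simp: bounded_iff)
    thus ?thesis by (intro exI[of _ 1]) auto
  next
    assume "filterlim (\<lambda>y. q1 y - q2 y) at_top at_infinity \<and>
        (\<exists>s>0. spherical_section_property CARD('m) s {x. A *v x = 0} \<and>
           (\<exists>xt. xt \<noteq> 0 \<and> xt \<in> X \<and>
                 (\<forall>x\<in>X. q1 (A *v xt - b) - q2 (A *v xt - b) \<le> q1 (A *v x - b) - q2 (A *v x - b)) \<and>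
                 real (norm0 xt) < real CARD('m) / s))"
    then obtain s xt where coer: "filterlim q at_top at_infinity" and s: "s > 0"
      and ssp: "spherical_section_property CARD('m) s {x. A *v x = 0}"
      and xt: "xt \<noteq> 0" "xt \<in> X" and qmin: "\<And>x. x \<in> X \<Longrightarrow> q (P xt) \<le> q (P x)"
      and xt0: "real (norm0 xt) < real CARD('m) / s"
      unfolding q_def P_def by (auto simp: q_def[abs_def])
    define c where "c = lam * (real CARD('m) / s)"
    define qm where "qm = q (P xt)"
    have Fxt: "F xt < c + qm"
    proof -
      have "(norm1 xt)^2 / (norm xt)^2 \<le> real (norm0 xt)"
        using norm1_sq_le[of xt] xt(1) by (simp add: divide_le_eq)
      also have "\<dots> < real CARD('m) / s" by (rule xt0)
      finally have "lam * ((norm1 xt)^2 / (norm xt)^2) < lam * (real CARD('m) / s)"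
        using lam_pos by (intro mult_strict_left_mono)
      thus ?thesis unfolding F_def c_def qm_def by simp
    qed
    have vxt: "v \<le> F xt" using v_le xt by simp
    define e where "e = (c + qm - F xt) / 2"
    have e: "e > 0" using Fxt e_def by simp
    show ?thesis
    proof (rule ccontr)
      assume "\<not> ?thesis"
      hence "\<forall>k. \<exists>x\<in>X-{0}. F x \<le> v + e \<and> norm x > real (Suc k)" using e by (auto simp: not_le)
      then obtain ys where ys: "\<And>k. ys k \<in> X - {0}" "\<And>k. F (ys k) \<le> v + e"
        "\<And>k. norm (ys k) > real (Suc k)" by metis
      obtain R0 where R0: "\<And>y. R0 \<le> norm y \<Longrightarrow> v + e + 1 \<le> q y"
        using coer unfolding filterlim_at_top eventually_at_infinity by blast
      have PR0: "norm (P (ys k)) < R0" for k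
      proof (rule ccontr)
        assume "\<not> ?thesis"
        hence "v + e + 1 \<le> q (P (ys k))" using R0 by simp
        moreover have "lam + q (P (ys k)) \<le> F (ys k)" using Fge ys(1)[of k] by simp
        ultimately show False using ys(2)[of k] lam_pos by simp
      qed
      define u where "u k = (1 / norm (ys k)) *\<^sub>R ys k" for k
      have ys0: "ys k \<noteq> 0" for k using ys(1) by simp
      have nu: "norm (u k) = 1" for k unfolding u_def using ys0 by simp
      have "bounded (range u)" using nu by (auto simp: bounded_iff)
      then obtain d r where r: "strict_mono r" and lim: "(u \<circ> r) \<longlonglongrightarrow> d"
        using bounded_imp_convergent_subsequence by blast
      have "(\<lambda>k. norm (u (r k))) \<longlonglongrightarrow> norm d" using tendsto_norm lim by (simp add: o_def)
      hence nd: "norm d = 1" using nu LIMSEQ_unique[OF _ tendsto_const[of 1]] by simp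
      have Au0: "(\<lambda>k. A *v u k) \<longlonglongrightarrow> 0"
      proof (rule Lim_null_comparison)
        show "\<forall>\<^sub>F k in sequentially. norm (A *v u k) \<le> (R0 + norm b) * inverse (real (Suc k))"
        proof (rule always_eventually, rule allI)
          fix k
          have "A *v u k = (1 / norm (ys k)) *\<^sub>R (P (ys k) + b)"
            unfolding u_def P_def by (simp add: matrix_vector_mult_scaleR)
          hence "norm (A *v u k) = (norm (P (ys k) + b)) / norm (ys k)" by simp
          also have "\<dots> \<le> (R0 + norm b) / norm (ys k)"
            using PR0[of k] norm_triangle_ineq[of "P (ys k)" b] ys0[of k]
            by (intro divide_right_mono) auto
          also have "\<dots> \<le> (R0 + norm b) / real (Suc k)"
          proof (rule divide_left_mono)
            show "0 \<le> R0 + norm b" using PR0[of k] norm_ge_zero[of "P (ys k)"] norm_ge_zero[of b] by linarith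
            show "real (Suc k) \<le> norm (ys k)" using ys(3)[of k] by simp
            show "0 < norm (ys k) * real (Suc k)" using ys0[of k] by simp
          qed
          finally show "norm (A *v u k) \<le> (R0 + norm b) * inverse (real (Suc k))" by (simp add: divide_inverse)
        qed
        show "(\<lambda>k. (R0 + norm b) * inverse (real (Suc k))) \<longlonglongrightarrow> 0"
          using tendsto_mult[OF tendsto_const LIMSEQ_inverse_real_of_nat] by simp
      qed
      have "(\<lambda>k. A *v u (r k)) \<longlonglongrightarrow> A *v d"
      proof -
        have "isCont (\<lambda>x. A *v x) d" by (intro continuous_intros)
        from isCont_tendsto_compose[OF this lim] show ?thesis by (simp add: o_def)
      qed
      moreover have "(\<lambda>k. A *v u (r k)) \<longlonglongrightarrow> 0" using LIMSEQ_subseq_LIMSEQ[OF Au0 r] by (simp add: o_def)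
      ultimately have Ad: "A *v d = 0" using LIMSEQ_unique by blast
      have d0: "d \<noteq> 0" using nd by auto
      have "ereal (sqrt (real CARD('m) / s)) \<le> (INF v\<in>{x. A *v x = 0} - {0}. ereal (norm1 v / norm v))"
        using ssp unfolding spherical_section_property_def by blast
      also have "\<dots> \<le> ereal (norm1 d / norm d)" using Ad d0 by (intro INF_lower) auto
      finally have "sqrt (real CARD('m) / s) \<le> norm1 d" using nd by simp
      hence "(sqrt (real CARD('m) / s))^2 \<le> (norm1 d)^2" using s by (intro power_mono) auto
      hence cd: "c \<le> lam * (norm1 d)^2" unfolding c_def using s lam_pos mult_left_mono[of "real CARD('m) / s" "(norm1 d)^2" lam] by simp
      have n1c: "isCont norm1 x" for x using norm1_cont continuous_on_eq_continuous_at open_UNIV by blast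
      have "(\<lambda>k. lam * (norm1 (u (r k)))^2 + qm) \<longlonglongrightarrow> lam * (norm1 d)^2 + qm"
        using isCont_tendsto_compose[OF n1c lim] by (intro tendsto_intros) (simp add: o_def)
      moreover have "lam * (norm1 (u k))^2 + qm \<le> v + e" for k
      proof -
        have "norm1 (u k) = norm1 (ys k) / norm (ys k)" unfolding u_def norm1_scale by simp
        hence "lam * (norm1 (u k))^2 + qm = lam * (norm1 (ys k))^2 / (norm (ys k))^2 + qm"
          by (simp add: power_divide)
        also have "\<dots> \<le> F (ys k)" unfolding F_def qm_def using qmin ys(1)[of k] by simp
        finally show ?thesis using ys(2)[of k] by simp
      qed
      ultimately have "lam * (norm1 d)^2 + qm \<le> v + e"
        by (intro LIMSEQ_le_const2) auto
      hence "c + qm \<le> F xt + e" using cd vxt by linarith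
      thus False using Fxt unfolding e_def by (simp add: field_simps)
    qed
  qed
  then obtain e R where e: "e > 0" and R: "\<And>x. x \<in> X-{0} \<Longrightarrow> F x \<le> v + e \<Longrightarrow> norm x \<le> R" by blast
  have "\<forall>k. \<exists>x\<in>X-{0}. F x < v + e / real (Suc k)" using approx e by simp
  then obtain xs where xs: "\<And>k. xs k \<in> X - {0}" "\<And>k. F (xs k) < v + e / real (Suc k)" by metis
  have xsR: "norm (xs k) \<le> R" for k
  proof -
    have "e / real (Suc k) \<le> e" using e by (simp add: divide_le_eq)
    thus ?thesis using xs[of k] R[of "xs k"] by simp
  qed
  have bdd_xs: "bounded (range xs)" using xsR by (auto simp: bounded_iff)
  have Fxs: "(\<lambda>k. F (xs k)) \<longlonglongrightarrow> v"
  proof (rule tendsto_sandwich[of "\<lambda>_. v" _ _ "\<lambda>k. v + e / real (Suc k)"])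
    show "\<forall>\<^sub>F n in sequentially. v \<le> F (xs n)" by (intro always_eventually allI v_le xs(1))
    show "\<forall>\<^sub>F n in sequentially. F (xs n) \<le> v + e / real (Suc n)" by (intro always_eventually allI less_imp_le xs(2))
    show "(\<lambda>n. v) \<longlonglongrightarrow> v" by simp
    have "(\<lambda>n. e / real (Suc n)) \<longlonglongrightarrow> 0"
      using tendsto_mult[OF tendsto_const[of e] LIMSEQ_inverse_real_of_nat] by (simp add: divide_inverse)
    thus "(\<lambda>n. v + e / real (Suc n)) \<longlonglongrightarrow> v" using tendsto_add[OF tendsto_const[of v]] by fastforce
  qed
  obtain l r where r: "strict_mono r" and lim: "(xs \<circ> r) \<longlonglongrightarrow> l"
    using bounded_imp_convergent_subsequence[OF bdd_xs] by blast
  have lX: "l \<in> X"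
    using hr_closed[OF X_rect] lim xs(1) closed_sequentially[of X "xs \<circ> r" l] by auto
  have Fr: "(\<lambda>k. F (xs (r k))) \<longlonglongrightarrow> v" using LIMSEQ_subseq_LIMSEQ[OF Fxs r] by (simp add: o_def)
  have l0: "l \<noteq> 0"
  proof
    assume "l = 0"
    have "(\<lambda>k. lam + q (P (xs (r k)))) \<longlonglongrightarrow> lam + q (P 0)"
      using lim \<open>l = 0\<close> isCont_tendsto_compose[OF q_cont isCont_tendsto_compose[OF P_cont]]
      by (intro tendsto_add tendsto_const) (auto simp: o_def)
    hence "lam + q (P 0) \<le> v"
      using Fr Fge xs(1) by (intro LIMSEQ_le[of _ _ "\<lambda>k. F (xs (r k))"]) auto
    thus False using v_lt by simp
  qed
  have "(\<lambda>k. F (xs (r k))) \<longlonglongrightarrow> F l"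
    using isCont_tendsto_compose[OF F_cont[OF l0]] lim by (simp add: o_def)
  hence Fl: "F l = v" using Fr LIMSEQ_unique by blast
  have "ereal (F l) = (INF x\<in>X-{0}. ereal (F x))"
    using lX l0 Fl v_le by (intro antisym INF_greatest) (auto intro: INF_lower2)
  hence "\<exists>x\<in>X-{0}. ereal (F x) = (INF x\<in>X-{0}. ereal (F x))" using lX l0 by blast
  thus ?thesis by (simp add: F_def q_def P_def)
qed

end
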